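(* In the Pathfinder game (started from the position consisting of the root constituent $\delta^{(0)} = \top$), neither player has a winning strategy, i.e. no strategy of either player guarantees a win against every strategy of the opponent.
   Context: $L$ is a first-order language without equality with finitely many predicate symbols and no function or constant symbols. For $d \in \mathbb{N}$, $\Delta^{(d)}$ is the finite set of Hintikka constituents of depth $d$ with no free variables ($\Delta^{(0)} = \{\top\}$, which is consistent); a constituent is consistent iff satisfiable, and every consistent constituent has a consistent depth-$(d+1)$ expansion. $\mathrm{expand}(1,\delta^{(d)})\subseteq\Delta^{(d+1)}$ denotes the expansions of $\delta^{(d)}$. Refinement tree: on $\Delta = \bigcup_d \Delta^{(d)}$ put an edge from each $\delta^{(d)}$ to each member of $\mathrm{expand}(1,\delta^{(d)})$, keeping a constituent lying in several depth-$d$ expansions as child of only one of them (such shared constituents are inconsistent). Pathfinder is a two-player alternating-turn game. Positions are finite sequences $\delta^{(0)}\delta^{(1)}\cdots\delta^{(d)}$ with each $\delta^{(k+1)}$ a child of $\delta^{(k)}$, possibly followed by a terminal symbol $*$. The player to move at a non-terminal position ending in $\delta^{(d)}$ either (select) appends a child $\delta^{(d+1)}$ of $\delta^{(d)}$ and passes the turn, or (challenge) appends $*$, ending the game; after a challenge on $\delta^{(d)}$, the challenging player wins if $\delta^{(d)}$ is inconsistent and the other player wins if $\delta^{(d)}$ is consistent. A play that never ends has no winner. *)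

theory Defs
  imports Main "HOL-Library.FSet"
begin

text \<open>Variables are x_0, x_1, ...; an atom is a pair (P, args) with args a list
  of variable indices of length ar P.  No equality, no function/constant symbols.\<close>

text \<open>A constituent
  with k free variables x_0..x_(k-1) of depth d is  Cst A S  meaning
    (conjunction of the atoms "new at k", positive if in A, negated otherwise)
    \<and> (\<And>_(c\<in>S) \<exists>x_k. c) \<and> \<forall>x_k. \<Or>_(c\<in>S) c
  where S is a finite set of constituents of depth d-1 with k+1 free variables
  (for d = 0 only the atomic part is present).\<close>

datatype 'p cst = Cst "('p \<times> nat list) set" "'p cst fset"

text \<open>Atoms in the variables x_0..x_(k-1) that actually contain x_(k-1)
  (the atoms added when the k-th variable is introduced).\<close>
definition natoms :: "('p \<Rightarrow> nat) \<Rightarrow> nat \<Rightarrow> ('p \<times> nat list) set" where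
  "natoms ar k = {(P, args). length args = ar P \<and> set args \<subseteq> {..<k}
                      \<and> \<not> set args \<subseteq> {..<k - 1}}"

fun is_cst :: "('p \<Rightarrow> nat) \<Rightarrow> nat \<Rightarrow> nat \<Rightarrow> 'p cst \<Rightarrow> bool" where
  "is_cst ar k 0 (Cst A S) \<longleftrightarrow> A \<subseteq> natoms ar k \<and> S = {||}"
| "is_cst ar k (Suc d) (Cst A S) \<longleftrightarrow> A \<subseteq> natoms ar k \<and> (\<forall>c. c |\<in>| S \<longrightarrow> is_cst ar (Suc k) d c)"

definition Delta :: "('p \<Rightarrow> nat) \<Rightarrow> nat \<Rightarrow> 'p cst set" where
  "Delta ar d = {c. is_cst ar 0 d c}"

definition top_cst :: "'p cst" where "top_cst = Cst {} {||}"

text \<open>Satisfaction of a depth-d constituent in a structure with (nonempty) domain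
  D and interpretation I, under the assignment x_i := vs ! i (k = length vs).\<close>
fun sat :: "('p \<Rightarrow> nat) \<Rightarrow> nat set \<Rightarrow> ('p \<Rightarrow> nat list \<Rightarrow> bool) \<Rightarrow> nat list
             \<Rightarrow> nat \<Rightarrow> 'p cst \<Rightarrow> bool" where
  "sat ar D I vs 0 (Cst A S) \<longleftrightarrow>
     (\<forall>(P, args)\<in>natoms ar (length vs). I P (map (\<lambda>i. vs ! i) args) \<longleftrightarrow> (P, args) \<in> A)"
| "sat ar D I vs (Suc d) (Cst A S) \<longleftrightarrow>
     (\<forall>(P, args)\<in>natoms ar (length vs). I P (map (\<lambda>i. vs ! i) args) \<longleftrightarrow> (P, args) \<in> A)
     \<and> (\<forall>c. c |\<in>| S \<longrightarrow> (\<exists>x\<in>D. sat ar D I (vs @ [x]) d c))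
     \<and> (\<forall>x\<in>D. \<exists>c. c |\<in>| S \<and> sat ar D I (vs @ [x]) d c)"

text \<open>Consistency of a closed depth-d constituent = satisfiability (by downward
  Loewenheim-Skolem, countable domains, here subsets of nat, suffice).\<close>
definition consistent :: "('p \<Rightarrow> nat) \<Rightarrow> nat \<Rightarrow> 'p cst \<Rightarrow> bool" where
  "consistent ar d c \<longleftrightarrow> (\<exists>(D::nat set) I. D \<noteq> {} \<and> sat ar D I [] d c)"

fun trunc :: "nat \<Rightarrow> 'p cst \<Rightarrow> 'p cst" where
  "trunc 0 (Cst A S) = Cst A {||}"
| "trunc (Suc n) (Cst A S) = Cst A (trunc n |`| S)"

definition expand1 :: "('p \<Rightarrow> nat) \<Rightarrow> nat \<Rightarrow> 'p cst \<Rightarrow> 'p cst set" where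
  "expand1 ar d \<delta> = {c \<in> Delta ar (Suc d). trunc d c = \<delta>}"

datatype 'p move = Select "'p cst" | Challenge

type_synonym 'p strategy = "'p cst list \<Rightarrow> 'p move"

definition legal :: "('p \<Rightarrow> nat) \<Rightarrow> 'p strategy \<Rightarrow> bool" where
  "legal ar \<sigma> \<longleftrightarrow> (\<forall>pos c. pos \<noteq> [] \<longrightarrow> \<sigma> pos = Select c
                       \<longrightarrow> c \<in> expand1 ar (length pos - 1) (last pos))"

primrec play :: "'p strategy \<Rightarrow> 'p strategy \<Rightarrow> nat \<Rightarrow> 'p cst list" where
  "play s0 s1 0 = [top_cst]"
| "play s0 s1 (Suc n) = (case (if even n then s0 else s1) (play s0 s1 n) of
                           Select c \<Rightarrow> play s0 s1 n @ [c]
                         | Challenge \<Rightarrow> play s0 s1 n)"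

definition mv :: "'p strategy \<Rightarrow> 'p strategy \<Rightarrow> nat \<Rightarrow> 'p move" where
  "mv s0 s1 n = (if even n then s0 else s1) (play s0 s1 n)"

text \<open>Infinite plays have no winner.\<close>
definition wins :: "('p \<Rightarrow> nat) \<Rightarrow> nat \<Rightarrow> 'p strategy \<Rightarrow> 'p strategy \<Rightarrow> bool" where
  "wins ar p s0 s1 \<longleftrightarrow>
     (\<exists>n. (\<forall>m<n. mv s0 s1 m \<noteq> Challenge) \<and> mv s0 s1 n = Challenge \<and>
          (let pos = play s0 s1 n; \<delta> = last pos; d = length pos - 1 in
             if n mod 2 = p then \<not> consistent ar d \<delta> else consistent ar d \<delta>))"

definition winning_strategy0 :: "('p \<Rightarrow> nat) \<Rightarrow> 'p strategy \<Rightarrow> bool" where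
  "winning_strategy0 ar s0 \<longleftrightarrow> legal ar s0 \<and> (\<forall>s1. legal ar s1 \<longrightarrow> wins ar 0 s0 s1)"

definition winning_strategy1 :: "('p \<Rightarrow> nat) \<Rightarrow> 'p strategy \<Rightarrow> bool" where
  "winning_strategy1 ar s1 \<longleftrightarrow> legal ar s1 \<and> (\<forall>s0. legal ar s0 \<longrightarrow> wins ar 1 s0 s1)"

end

theory Submission
  imports Defs
begin

lemma finite_natoms:
  fixes ar :: "'p::finite \<Rightarrow> nat"
  shows "finite (natoms ar k)"
proof -
  have "natoms ar k \<subseteq> UNIV \<times> {xs. set xs \<subseteq> {..<k} \<and> length xs \<le> Max (range ar)}"
    unfolding natoms_def by (auto intro!: Max_ge)
  moreover have "finite ((UNIV::'p set) \<times> {xs. set xs \<subseteq> {..<k} \<and> length xs \<le> Max (range ar)})"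
    by (intro finite_cartesian_product) (auto intro: finite_lists_length_le)
  ultimately show ?thesis by (rule finite_subset)
qed

lemma finite_fsets: "finite F \<Longrightarrow> finite {S. fset S \<subseteq> F}"
proof -
  assume "finite F"
  have "{S. fset S \<subseteq> F} \<subseteq> Abs_fset ` Pow F"
    by (auto intro!: image_eqI[where x="fset _"] simp: fset_inverse)
  then show ?thesis using \<open>finite F\<close> finite_subset by blast
qed

lemma finite_is_cst:
  fixes ar :: "'p::finite \<Rightarrow> nat"
  shows "finite {c. is_cst ar k d c}"
proof (induction d arbitrary: k)
  case 0
  have "{c. is_cst ar k 0 c} \<subseteq> (\<lambda>A. Cst A {||}) ` Pow (natoms ar k)"
  proof
    fix c assume "c \<in> {c. is_cst ar k 0 c}"
    then show "c \<in> (\<lambda>A. Cst A {||}) ` Pow (natoms ar k)" by (cases c) auto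
  qed
  then show ?case using finite_natoms finite_subset by blast
next
  case (Suc d)
  let ?F = "{c. is_cst ar (Suc k) d c}"
  have "{c. is_cst ar k (Suc d) c} \<subseteq> (\<lambda>(A,S). Cst A S) ` (Pow (natoms ar k) \<times> {S. fset S \<subseteq> ?F})"
  proof
    fix c assume "c \<in> {c. is_cst ar k (Suc d) c}"
    then show "c \<in> (\<lambda>(A,S). Cst A S) ` (Pow (natoms ar k) \<times> {S. fset S \<subseteq> ?F})"
    proof (cases c)
      case (Cst A S)
      then show ?thesis using \<open>c \<in> {c. is_cst ar k (Suc d) c}\<close>
        by (auto intro!: image_eqI[where x="(A,S)"])
    qed
  qed
  moreover have "finite (Pow (natoms ar k) \<times> {S. fset S \<subseteq> ?F})"
    using finite_natoms finite_fsets[OF Suc.IH[of "Suc k"]] by auto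
  ultimately show ?case using finite_subset by blast
qed

definition atset :: "('p \<Rightarrow> nat) \<Rightarrow> ('p \<Rightarrow> nat list \<Rightarrow> bool) \<Rightarrow> nat list \<Rightarrow> ('p \<times> nat list) set" where
  "atset ar I vs = {(P, args) \<in> natoms ar (length vs). I P (map (\<lambda>i. vs ! i) args)}"

fun charc :: "('p \<Rightarrow> nat) \<Rightarrow> nat set \<Rightarrow> ('p \<Rightarrow> nat list \<Rightarrow> bool) \<Rightarrow> nat list \<Rightarrow> nat \<Rightarrow> 'p cst" where
  "charc ar D I vs 0 = Cst (atset ar I vs) {||}"
| "charc ar D I vs (Suc d) = Cst (atset ar I vs) (Abs_fset ((\<lambda>x. charc ar D I (vs @ [x]) d) ` D))"

lemma charc_is_cst:
  fixes ar :: "'p::finite \<Rightarrow> nat"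
  shows "is_cst ar (length vs) d (charc ar D I vs d)"
proof (induction d arbitrary: vs)
  case 0
  then show ?case by (auto simp: atset_def)
next
  case (Suc d)
  let ?X = "(\<lambda>x. charc ar D I (vs @ [x]) d) ` D"
  have "is_cst ar (Suc (length vs)) d (charc ar D I (vs @ [x]) d)" for x
    using Suc.IH[of "vs @ [x]"] by simp
  then have sub: "?X \<subseteq> {c. is_cst ar (Suc (length vs)) d c}" by blast
  then have "finite ?X" using finite_is_cst finite_subset by blast
  then have "fset (Abs_fset ?X) = ?X" by (simp add: Abs_fset_inverse)
  then show ?case using sub by (auto simp: atset_def)
qed

lemma charc_fset:
  fixes ar :: "'p::finite \<Rightarrow> nat"
  shows "fset (Abs_fset ((\<lambda>x. charc ar D I (vs @ [x]) d) ` D)) = (\<lambda>x. charc ar D I (vs @ [x]) d) ` D"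
proof -
  let ?X = "(\<lambda>x. charc ar D I (vs @ [x]) d) ` D"
  have "is_cst ar (Suc (length vs)) d (charc ar D I (vs @ [x]) d)" for x
    using charc_is_cst[of ar "vs @ [x]"] by simp
  then have sub: "?X \<subseteq> {c. is_cst ar (Suc (length vs)) d c}" by blast
  then have "finite ?X" using finite_is_cst finite_subset by blast
  then show ?thesis by (simp add: Abs_fset_inverse)
qed

lemma charc_sat:
  fixes ar :: "'p::finite \<Rightarrow> nat"
  shows "sat ar D I vs d (charc ar D I vs d)"
proof (induction d arbitrary: vs)
  case 0
  then show ?case by (auto simp: atset_def)
next
  case (Suc d)
  show ?case using Suc.IH by (auto simp: atset_def charc_fset)
qed

lemma charc_unique:
  fixes ar :: "'p::finite \<Rightarrow> nat"
  shows "is_cst ar (length vs) d c \<Longrightarrow> sat ar D I vs d c \<Longrightarrow> c = charc ar D I vs d"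
proof (induction d arbitrary: vs c)
  case 0
  obtain A S where c: "c = Cst A S" by (cases c)
  have "A = atset ar I vs" using 0 unfolding c atset_def by auto
  then show ?case using 0 c by auto
next
  case (Suc d)
  obtain A S where c: "c = Cst A S" by (cases c)
  have A: "A = atset ar I vs" using Suc.prems unfolding c atset_def by auto
  have "fset S = (\<lambda>x. charc ar D I (vs @ [x]) d) ` D"
  proof
    show "fset S \<subseteq> (\<lambda>x. charc ar D I (vs @ [x]) d) ` D"
    proof
      fix c' assume "c' \<in> fset S"
      then obtain x where x: "x \<in> D" "sat ar D I (vs @ [x]) d c'" using Suc.prems c by auto
      have "is_cst ar (length (vs @ [x])) d c'" using Suc.prems c \<open>c' \<in> fset S\<close> by auto
      then have "c' = charc ar D I (vs @ [x]) d" using Suc.IH x(2) by blast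
      then show "c' \<in> (\<lambda>x. charc ar D I (vs @ [x]) d) ` D" using x by auto
    qed
  next
    show "(\<lambda>x. charc ar D I (vs @ [x]) d) ` D \<subseteq> fset S"
    proof
      fix c' assume "c' \<in> (\<lambda>x. charc ar D I (vs @ [x]) d) ` D"
      then obtain x where x: "x \<in> D" "c' = charc ar D I (vs @ [x]) d" by auto
      obtain c'' where c'': "c'' \<in> fset S" "sat ar D I (vs @ [x]) d c''" using Suc.prems c x by auto
      have "is_cst ar (length (vs @ [x])) d c''" using Suc.prems c c'' by auto
      then have "c'' = charc ar D I (vs @ [x]) d" using Suc.IH c''(2) by blast
      then show "c' \<in> fset S" using c'' x by auto
    qed
  qed
  then have "S = Abs_fset ((\<lambda>x. charc ar D I (vs @ [x]) d) ` D)"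
    by (metis fset_inverse)
  then show ?case using A c by simp
qed

lemma charc_trunc:
  fixes ar :: "'p::finite \<Rightarrow> nat"
  shows "trunc d (charc ar D I vs (Suc d)) = charc ar D I vs d"
proof (induction d arbitrary: vs)
  case 0
  then show ?case by simp
next
  case (Suc d)
  have "fset (trunc d |`| Abs_fset ((\<lambda>x. charc ar D I (vs @ [x]) (Suc d)) ` D))
        = fset (Abs_fset ((\<lambda>x. charc ar D I (vs @ [x]) d) ` D))"
    by (simp add: fimage.rep_eq charc_fset image_image Suc.IH del: charc.simps)
  then have "trunc d |`| Abs_fset ((\<lambda>x. charc ar D I (vs @ [x]) (Suc d)) ` D)
        = Abs_fset ((\<lambda>x. charc ar D I (vs @ [x]) d) ` D)"
    using fset_inject by blast
  then show ?case by simp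
qed

lemma exists_child:
  fixes ar :: "'p::finite \<Rightarrow> nat"
  assumes "\<delta> \<in> Delta ar d" "consistent ar d \<delta>"
  shows "\<exists>c. c \<in> expand1 ar d \<delta> \<and> consistent ar (Suc d) c"
proof -
  obtain D I where DI: "(D::nat set) \<noteq> {}" "sat ar D I [] d \<delta>"
    using assms(2) unfolding consistent_def by auto
  have "is_cst ar (length ([]::nat list)) d \<delta>" using assms(1) unfolding Delta_def by simp
  then have "\<delta> = charc ar D I [] d"
    using DI(2) by (rule charc_unique)
  moreover have "is_cst ar (length ([]::nat list)) (Suc d) (charc ar D I [] (Suc d))"
    by (rule charc_is_cst)
  then have "charc ar D I [] (Suc d) \<in> Delta ar (Suc d)"
    by (simp add: Delta_def del: charc.simps is_cst.simps)
  ultimately have "charc ar D I [] (Suc d) \<in> expand1 ar d \<delta>"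
    unfolding expand1_def using charc_trunc[of d ar D I "[]"] by (simp del: charc.simps)
  moreover have "consistent ar (Suc d) (charc ar D I [] (Suc d))"
    unfolding consistent_def
  proof (intro exI conjI)
    show "sat ar D I [] (Suc d) (charc ar D I [] (Suc d))" by (rule charc_sat)
  qed (simp add: DI(1))
  ultimately show ?thesis by blast
qed

definition g :: "('p \<Rightarrow> nat) \<Rightarrow> 'p strategy" where
  "g ar pos = (if \<exists>c. c \<in> expand1 ar (length pos - 1) (last pos) \<and> consistent ar (Suc (length pos - 1)) c
     then Select (SOME c. c \<in> expand1 ar (length pos - 1) (last pos) \<and> consistent ar (Suc (length pos - 1)) c)
     else Challenge)"

lemma g_sel:
  assumes "g ar pos = Select c"
  shows "c \<in> expand1 ar (length pos - 1) (last pos) \<and> consistent ar (Suc (length pos - 1)) c"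
proof -
  have ex: "\<exists>c. c \<in> expand1 ar (length pos - 1) (last pos) \<and> consistent ar (Suc (length pos - 1)) c"
    using assms unfolding g_def by (auto split: if_splits)
  then have "c = (SOME c. c \<in> expand1 ar (length pos - 1) (last pos) \<and> consistent ar (Suc (length pos - 1)) c)"
    using assms unfolding g_def by auto
  then show ?thesis using someI_ex[OF ex] by simp
qed

lemma g_legal: "legal ar (g ar)"
  unfolding legal_def using g_sel by blast

lemma g_chal:
  fixes ar :: "'p::finite \<Rightarrow> nat"
  assumes "g ar pos = Challenge" "last pos \<in> Delta ar (length pos - 1)"
  shows "\<not> consistent ar (length pos - 1) (last pos)"
  using assms exists_child[of "last pos" ar "length pos - 1"] unfolding g_def
  by (auto split: if_splits)

lemma play_Suc': "play s0 s1 (Suc n) = (case mv s0 s1 n of Select c \<Rightarrow> play s0 s1 n @ [c] | Challenge \<Rightarrow> play s0 s1 n)"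
  by (simp add: mv_def)

lemma play_ne: "play s0 s1 n \<noteq> []"
  by (induction n) (auto split: move.splits)

lemma top_Delta: "top_cst \<in> Delta ar 0"
  by (simp add: top_cst_def Delta_def)

lemma top_cons:
  assumes "\<forall>P. 0 < ar P"
  shows "consistent ar 0 top_cst"
proof -
  have "natoms ar 0 = {}" using assms unfolding natoms_def by auto
  then have "sat ar {0} (\<lambda>_ _. False) [] 0 top_cst" by (simp add: top_cst_def)
  then show ?thesis unfolding consistent_def by blast
qed

lemma play_wf:
  assumes "legal ar s0" "legal ar s1"
  shows "last (play s0 s1 n) \<in> Delta ar (length (play s0 s1 n) - 1)"
proof (induction n)
  case 0
  then show ?case by (simp add: top_Delta)
next
  case (Suc n)
  show ?case
  proof (cases "mv s0 s1 n")
    case (Select c)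
    have "(if even n then s0 else s1) (play s0 s1 n) = Select c" using Select by (simp add: mv_def)
    then have "c \<in> expand1 ar (length (play s0 s1 n) - 1) (last (play s0 s1 n))"
      using assms play_ne[of s0 s1 n] unfolding legal_def by (auto split: if_splits)
    then have "c \<in> Delta ar (Suc (length (play s0 s1 n) - 1))" unfolding expand1_def by auto
    then show ?thesis using Select play_ne[of s0 s1 n] by (simp add: play_Suc' del: play.simps)
  next
    case Challenge
    then show ?thesis using Suc by (simp add: play_Suc' del: play.simps)
  qed
qed

lemma after_g:
  assumes "mv s0 s1 m \<noteq> Challenge" "(if even m then s0 else s1) = g ar"
  shows "consistent ar (length (play s0 s1 (Suc m)) - 1) (last (play s0 s1 (Suc m)))"
proof -
  obtain c where c: "mv s0 s1 m = Select c" using assms(1) by (cases "mv s0 s1 m") auto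
  then have "g ar (play s0 s1 m) = Select c" using assms(2) by (simp add: mv_def)
  then have "consistent ar (Suc (length (play s0 s1 m) - 1)) c" using g_sel by blast
  then show ?thesis using c play_ne[of s0 s1 m] by (simp add: play_Suc' del: play.simps)
qed

lemma at_g:
  fixes ar :: "'p::finite \<Rightarrow> nat"
  assumes "mv s0 s1 n = Challenge" "(if even n then s0 else s1) = g ar" "legal ar s0" "legal ar s1"
  shows "\<not> consistent ar (length (play s0 s1 n) - 1) (last (play s0 s1 n))"
proof -
  have "g ar (play s0 s1 n) = Challenge" using assms(1,2) by (simp add: mv_def)
  then show ?thesis using g_chal play_wf[OF assms(3,4)] by blast
qed

theorem mainTheorem11:
  fixes ar :: "'p::finite \<Rightarrow> nat"
  assumes "\<forall>P. 0 < ar P"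
  shows "\<not> (\<exists>s0. winning_strategy0 ar s0) \<and> \<not> (\<exists>s1. winning_strategy1 ar s1)"
proof
  show "\<not> (\<exists>s0. winning_strategy0 ar s0)"
  proof
    assume "\<exists>s0. winning_strategy0 ar s0"
    then obtain s0 where L: "legal ar s0" and W: "wins ar 0 s0 (g ar)"
      unfolding winning_strategy0_def using g_legal by blast
    define C where "C n = consistent ar (length (play s0 (g ar) n) - 1) (last (play s0 (g ar) n))" for n
    obtain n where n: "\<forall>m<n. mv s0 (g ar) m \<noteq> Challenge" "mv s0 (g ar) n = Challenge"
      and res: "if n mod 2 = 0 then \<not> C n else C n"
      using W unfolding wins_def Let_def C_def by blast
    show False
    proof (cases "even n")
      case True
      then have nc: "\<not> C n" using res by simp
      show False
      proof (cases n)
        case 0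
        then have "C n" unfolding C_def using top_cons[OF assms] by simp
        then show False using nc by blast
      next
        case (Suc m)
        have "odd m" using Suc True by simp
        then have o: "(if even m then s0 else g ar) = g ar" by simp
        have "mv s0 (g ar) m \<noteq> Challenge" using n(1) Suc by simp
        then have "C (Suc m)" unfolding C_def using o by (rule after_g)
        then show False using nc Suc by simp
      qed
    next
      case False
      then have c: "C n" using res by presburger
      have "(if even n then s0 else g ar) = g ar" using False by simp
      then have "\<not> C n" unfolding C_def by (rule at_g[OF n(2) _ L g_legal])
      then show False using c by blast
    qed
  qed
next
  show "\<not> (\<exists>s1. winning_strategy1 ar s1)"
  proof
    assume "\<exists>s1. winning_strategy1 ar s1"
    then obtain s1 where L: "legal ar s1" and W: "wins ar 1 (g ar) s1"
      unfolding winning_strategy1_def using g_legal by blast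
    define C where "C n = consistent ar (length (play (g ar) s1 n) - 1) (last (play (g ar) s1 n))" for n
    obtain n where n: "\<forall>m<n. mv (g ar) s1 m \<noteq> Challenge" "mv (g ar) s1 n = Challenge"
      and res: "if n mod 2 = 1 then \<not> C n else C n"
      using W unfolding wins_def Let_def C_def by blast
    show False
    proof (cases "even n")
      case True
      then have c: "C n" using res by presburger
      have "(if even n then g ar else s1) = g ar" using True by simp
      then have "\<not> C n" unfolding C_def by (rule at_g[OF n(2) _ g_legal L])
      then show False using c by blast
    next
      case False
      then have nc: "\<not> C n" using res by presburger
      then obtain m where m: "n = Suc m" using False by (cases n) auto
      have "even m" using m False by simp
      then have o: "(if even m then g ar else s1) = g ar" by simp
      have "mv (g ar) s1 m \<noteq> Challenge" using n(1) m by simp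
      then have "C (Suc m)" unfolding C_def using o by (rule after_g)
      then show False using nc m by simp
    qed
  qed
qed

end
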